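(* Let $F$ be a generalised clause-set, and let a generic translation $(T,\gamma)$ of $F$ be given. Then the boolean clause-set $T_\gamma(F)$ is satisfiable if and only if $F$ is satisfiable.
   Context: A generalised clause-set $F$ is a finite set of clauses over variables $v$, each with a finite non-empty domain $D_v$; a clause is a finite set of literals of the form "$v\ne\varepsilon$" with $\varepsilon\in D_v$; $\mathrm{var}(F)$ is the set of variables occurring in $F$. An assignment $\varphi$ maps each $v\in\mathrm{var}(F)$ to a value in $D_v$; it satisfies the literal "$v\ne\varepsilon$" if $\varphi(v)\ne\varepsilon$, a clause if it satisfies some literal of it, and $F$ if it satisfies every clause. Boolean clauses are finite sets of boolean literals (variables or their negations), satisfied by a boolean assignment if some literal is true; a boolean clause-set is satisfiable if some assignment satisfies all its clauses. A generic translation of $F$ consists of: for each $v\in\mathrm{var}(F)$ an unsatisfiable boolean clause-set $T(v)$, such that $T(v),T(w)$ have no variables in common for $v\ne w$; and for each $v$ an injective map $\gamma_v:D_v\to T(v)$ such that for every $\varepsilon\in D_v$ the clause-set $T(v)\setminus\{\gamma_v(\varepsilon)\}$ is satisfiable. Then $T_\gamma(F)$ consists of, for each clause $C\in F$, the boolean clause $\bigcup_{(v\ne\varepsilon)\in C}\gamma_v(\varepsilon)$, together with, for each $v\in\mathrm{var}(F)$, all clauses of $T(v)\setminus\{\gamma_v(\varepsilon):\varepsilon\in D_v\}$. *)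

theory Defs
  imports Main
begin

text \<open>A literal "v \<noteq> e" is the pair (v, e).\<close>

type_synonym ('v, 'e) glit = "'v \<times> 'e"
type_synonym ('v, 'e) gclause = "('v, 'e) glit set"
type_synonym ('v, 'e) gcls = "('v, 'e) gclause set"

definition gvar :: "('v, 'e) gcls \<Rightarrow> 'v set" where
  "gvar F = fst ` (\<Union>F)"

definition gclause_set :: "('v \<Rightarrow> 'e set) \<Rightarrow> ('v, 'e) gcls \<Rightarrow> bool" where
  "gclause_set D F \<longleftrightarrow> finite F \<and> (\<forall>C\<in>F. finite C) \<and>
     (\<forall>C\<in>F. \<forall>(v, e)\<in>C. e \<in> D v) \<and>
     (\<forall>v\<in>gvar F. finite (D v) \<and> D v \<noteq> {})"

definition gsat_assign :: "('v \<Rightarrow> 'e set) \<Rightarrow> ('v, 'e) gcls \<Rightarrow> ('v \<Rightarrow> 'e) \<Rightarrow> bool" where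
  "gsat_assign D F \<phi> \<longleftrightarrow> (\<forall>v\<in>gvar F. \<phi> v \<in> D v) \<and>
     (\<forall>C\<in>F. \<exists>(v, e)\<in>C. \<phi> v \<noteq> e)"

definition gsatisfiable :: "('v \<Rightarrow> 'e set) \<Rightarrow> ('v, 'e) gcls \<Rightarrow> bool" where
  "gsatisfiable D F \<longleftrightarrow> (\<exists>\<phi>. gsat_assign D F \<phi>)"

text \<open>Boolean clauses: a literal is (x, True) for x and (x, False) for its negation.\<close>
type_synonym 'b blit = "'b \<times> bool"
type_synonym 'b bclause = "'b blit set"
type_synonym 'b bcls = "'b bclause set"

definition bvar :: "'b bcls \<Rightarrow> 'b set" where
  "bvar S = fst ` (\<Union>S)"

definition bclause_set :: "'b bcls \<Rightarrow> bool" where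
  "bclause_set S \<longleftrightarrow> finite S \<and> (\<forall>C\<in>S. finite C)"

definition bsatisfiable :: "'b bcls \<Rightarrow> bool" where
  "bsatisfiable S \<longleftrightarrow> (\<exists>\<beta>. \<forall>C\<in>S. \<exists>(x, p)\<in>C. \<beta> x = p)"

definition generic_translation ::
  "('v \<Rightarrow> 'e set) \<Rightarrow> ('v, 'e) gcls \<Rightarrow> ('v \<Rightarrow> 'b bcls) \<Rightarrow> ('v \<Rightarrow> 'e \<Rightarrow> 'b bclause) \<Rightarrow> bool" where
  "generic_translation D F T \<gamma> \<longleftrightarrow>
     (\<forall>v\<in>gvar F. bclause_set (T v) \<and> \<not> bsatisfiable (T v)) \<and>
     (\<forall>v\<in>gvar F. \<forall>w\<in>gvar F. v \<noteq> w \<longrightarrow> bvar (T v) \<inter> bvar (T w) = {}) \<and>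
     (\<forall>v\<in>gvar F. inj_on (\<gamma> v) (D v) \<and> \<gamma> v ` D v \<subseteq> T v) \<and>
     (\<forall>v\<in>gvar F. \<forall>e\<in>D v. bsatisfiable (T v - {\<gamma> v e}))"

definition translate ::
  "('v \<Rightarrow> 'e set) \<Rightarrow> ('v, 'e) gcls \<Rightarrow> ('v \<Rightarrow> 'b bcls) \<Rightarrow> ('v \<Rightarrow> 'e \<Rightarrow> 'b bclause) \<Rightarrow> 'b bcls" where
  "translate D F T \<gamma> =
     (\<lambda>C. \<Union>(v, e)\<in>C. \<gamma> v e) ` F \<union> (\<Union>v\<in>gvar F. T v - \<gamma> v ` D v)"

end

theory Submission
  imports Defs
begin

theorem lemma5:
  fixes D :: "'v \<Rightarrow> 'e set" and F :: "('v, 'e) gcls"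
    and T :: "'v \<Rightarrow> 'b bcls" and \<gamma> :: "'v \<Rightarrow> 'e \<Rightarrow> 'b bclause"
  assumes "gclause_set D F"
    and "generic_translation D F T \<gamma>"
  shows "bsatisfiable (translate D F T \<gamma>) \<longleftrightarrow> gsatisfiable D F"
proof
  have unsat: "\<And>v. v \<in> gvar F \<Longrightarrow> \<not> bsatisfiable (T v)"
    and disj: "\<And>v w. v \<in> gvar F \<Longrightarrow> w \<in> gvar F \<Longrightarrow> v \<noteq> w \<Longrightarrow> bvar (T v) \<inter> bvar (T w) = {}"
    and inj: "\<And>v. v \<in> gvar F \<Longrightarrow> inj_on (\<gamma> v) (D v)"
    and sub: "\<And>v. v \<in> gvar F \<Longrightarrow> \<gamma> v ` D v \<subseteq> T v"
    and sat1: "\<And>v e. v \<in> gvar F \<Longrightarrow> e \<in> D v \<Longrightarrow> bsatisfiable (T v - {\<gamma> v e})"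
    using assms(2) unfolding generic_translation_def by (elim conjE; simp)+
  have dom: "\<And>C v e. C \<in> F \<Longrightarrow> (v, e) \<in> C \<Longrightarrow> e \<in> D v"
    using assms(1) unfolding gclause_set_def by blast
  have gv: "\<And>C v e. C \<in> F \<Longrightarrow> (v, e) \<in> C \<Longrightarrow> v \<in> gvar F"
    unfolding gvar_def by force
  {
    assume "bsatisfiable (translate D F T \<gamma>)"
    then obtain \<beta> where b: "\<forall>C\<in>translate D F T \<gamma>. \<exists>(x, p)\<in>C. \<beta> x = p"
      unfolding bsatisfiable_def by blast
    have ex: "\<exists>e. e \<in> D v \<and> \<not> (\<exists>(x, p)\<in>\<gamma> v e. \<beta> x = p)" if v: "v \<in> gvar F" for v
    proof -
      from unsat[OF v] obtain C where C: "C \<in> T v" "\<not> (\<exists>(x, p)\<in>C. \<beta> x = p)"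
        unfolding bsatisfiable_def by blast
      have "C \<notin> T v - \<gamma> v ` D v"
        using b C v unfolding translate_def by blast
      with C show ?thesis by blast
    qed
    define \<phi> where "\<phi> v = (SOME e. e \<in> D v \<and> \<not> (\<exists>(x, p)\<in>\<gamma> v e. \<beta> x = p))" for v
    have phi: "\<phi> v \<in> D v \<and> \<not> (\<exists>(x, p)\<in>\<gamma> v (\<phi> v). \<beta> x = p)" if "v \<in> gvar F" for v
      unfolding \<phi>_def by (rule someI_ex) (rule ex[OF that])
    have "gsat_assign D F \<phi>"
      unfolding gsat_assign_def
    proof (intro conjI ballI)
      fix v assume "v \<in> gvar F" thus "\<phi> v \<in> D v" using phi by blast
    next
      fix C assume C: "C \<in> F"
      hence "(\<Union>(v, e)\<in>C. \<gamma> v e) \<in> translate D F T \<gamma>" unfolding translate_def by blast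
      with b obtain x p where xp: "(x, p) \<in> (\<Union>(v, e)\<in>C. \<gamma> v e)" "\<beta> x = p" by blast
      then obtain v e where ve: "(v, e) \<in> C" "(x, p) \<in> \<gamma> v e" by blast
      have "\<phi> v \<noteq> e" using phi[OF gv[OF C ve(1)]] ve xp by blast
      thus "\<exists>(v, e)\<in>C. \<phi> v \<noteq> e" using ve by blast
    qed
    thus "gsatisfiable D F" unfolding gsatisfiable_def by blast
  }
  {
    assume "gsatisfiable D F"
    then obtain \<phi> where phi: "gsat_assign D F \<phi>" unfolding gsatisfiable_def by blast
    have exB: "\<exists>b. \<forall>C\<in>T v - {\<gamma> v (\<phi> v)}. \<exists>(x, p)\<in>C. b x = p" if "v \<in> gvar F" for v
      using sat1[OF that] phi that unfolding bsatisfiable_def gsat_assign_def by blast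
    define B where "B v = (SOME b. \<forall>C\<in>T v - {\<gamma> v (\<phi> v)}. \<exists>(x, p)\<in>C. b x = p)" for v
    have Bv: "\<forall>C\<in>T v - {\<gamma> v (\<phi> v)}. \<exists>(x, p)\<in>C. B v x = p" if "v \<in> gvar F" for v
      unfolding B_def by (rule someI_ex[where P="\<lambda>b. \<forall>C\<in>T v - {\<gamma> v (\<phi> v)}. \<exists>(x, p)\<in>C. b x = p"]) (rule exB[OF that])
    define \<beta> where "\<beta> x = B (SOME v. v \<in> gvar F \<and> x \<in> bvar (T v)) x" for x
    have bet: "\<beta> x = B v x" if "v \<in> gvar F" "x \<in> bvar (T v)" for v x
    proof -
      have "(SOME v. v \<in> gvar F \<and> x \<in> bvar (T v)) = v"
      proof (rule some_equality)
        fix w assume "w \<in> gvar F \<and> x \<in> bvar (T w)"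
        thus "w = v" using disj[of w v] that by blast
      qed (use that in blast)
      thus ?thesis unfolding \<beta>_def by simp
    qed
    have clause: "\<exists>(x, p)\<in>C. \<beta> x = p"
      if "v \<in> gvar F" "C \<in> T v" "C \<noteq> \<gamma> v (\<phi> v)" for v C
    proof -
      from Bv[OF that(1)] that obtain x p where "(x, p) \<in> C" "B v x = p" by blast
      moreover have "x \<in> bvar (T v)" using \<open>(x, p) \<in> C\<close> that(2) unfolding bvar_def by force
      ultimately show ?thesis using bet[OF that(1)] by blast
    qed
    have "\<forall>C\<in>translate D F T \<gamma>. \<exists>(x, p)\<in>C. \<beta> x = p"
    proof
      fix C assume "C \<in> translate D F T \<gamma>"
      then consider (a) C0 where "C0 \<in> F" "C = (\<Union>(v, e)\<in>C0. \<gamma> v e)"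
        | (b) v where "v \<in> gvar F" "C \<in> T v" "C \<notin> \<gamma> v ` D v"
        unfolding translate_def by blast
      thus "\<exists>(x, p)\<in>C. \<beta> x = p"
      proof cases
        case a
        from phi a(1) obtain v e where ve: "(v, e) \<in> C0" "\<phi> v \<noteq> e"
          unfolding gsat_assign_def by blast
        have v: "v \<in> gvar F" using gv a(1) ve(1) by blast
        have e: "e \<in> D v" using dom a(1) ve(1) by blast
        have pv: "\<phi> v \<in> D v" using phi v unfolding gsat_assign_def by blast
        have "\<gamma> v e \<noteq> \<gamma> v (\<phi> v)" using inj[OF v] e pv ve(2) unfolding inj_on_def by blast
        moreover have "\<gamma> v e \<in> T v" using sub[OF v] e by blast
        ultimately obtain x p where "(x, p) \<in> \<gamma> v e" "\<beta> x = p" using clause[OF v] by blast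
        thus ?thesis using a(2) ve(1) by blast
      next
        case b
        have "C \<noteq> \<gamma> v (\<phi> v)" using b phi unfolding gsat_assign_def by blast
        thus ?thesis using clause b by blast
      qed
    qed
    thus "bsatisfiable (translate D F T \<gamma>)" unfolding bsatisfiable_def by blast
  }
qed

end
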